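(* Let $T$ be a torus and $\mathcal S$ a finite set of closed subgroups of $T$. There exists an open cover $\mathcal U$ of $T\times T$ adapted to $\mathcal S$. Moreover, any refinement of $\mathcal U$ is also adapted to $\mathcal S$.
   Context: $\mathbb T=\mathbb R/\mathbb Z$, $\check T=\mathrm{Hom}(\mathbb T,T)$, $\mathfrak t=\check T\otimes\mathbb R$, $\pi:\mathfrak t\times\mathfrak t\to T\times T=\check T\otimes\mathbb T^2$ the quotient map. Preorder on $T\times T$: $c\le d$ iff for every $H\in\mathcal S$, $d\in H\times H$ implies $c\in H\times H$. An open $U\subset T\times T$ is small if $\pi^{-1}(U)$ is a disjoint union of connected components $V$ with $\pi|_V:V\to U$ bijective. An open cover $\mathcal U=\{U_c\}_{c\in T\times T}$ indexed by the points of $T\times T$ is adapted to $\mathcal S$ if: (1) $c\in U_c$ and $U_c$ is small; (2) if $U_c\cap U_d\neq\emptyset$ then $c\le d$ or $d\le c$; (3) if $c\le d$ and for some $H\in\mathcal S$ we have $c\in H\times H$ but $d\notin H\times H$, then $U_d\cap(H\times H)=\emptyset$; (4) if $c,d\in H\times H$ for some $H\in\mathcal S$ and $U_c\cap U_d\neq\emptyset$, then $c$ and $d$ lie in the same connected component of $H\times H$. A refinement of $\{U_c\}$ means an indexed open cover $\{U'_c\}_{c\in T\times T}$ with $c\in U'_c\subset U_c$ for all $c$. *)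

theory Defs
  imports "HOL-Analysis.Analysis"
begin

text \<open>Concrete model of an n-dimensional torus T = (S^1)^n inside complex^n,
  with group law componentwise multiplication. The quotient map
  R^n -> T is x |-> (exp(2 pi i x_k))_k, so that T = R^n / Z^n, the
  cocharacter lattice is Z^n and the Lie algebra t is R^n.\<close>

definition torus :: "(complex^'n) set" where
  "torus = {z. \<forall>i. cmod (z $ i) = 1}"

definition closed_subgroup :: "(complex^'n) set \<Rightarrow> bool" where
  "closed_subgroup H \<longleftrightarrow>
     H \<subseteq> torus \<and> closed H \<and> (\<chi> i. 1) \<in> H \<and>
     (\<forall>x\<in>H. \<forall>y\<in>H. (\<chi> i. x $ i * y $ i) \<in> H) \<and>
     (\<forall>x\<in>H. (\<chi> i. inverse (x $ i)) \<in> H)"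

definition tmap :: "real^'n \<Rightarrow> complex^'n" where
  "tmap x = (\<chi> i. exp (2 * of_real pi * \<i> * of_real (x $ i)))"

definition qmap :: "(real^'n) \<times> (real^'n) \<Rightarrow> (complex^'n) \<times> (complex^'n)" where
  "qmap p = (tmap (fst p), tmap (snd p))"

abbreviation TT :: "((complex^'n) \<times> (complex^'n)) set" where
  "TT \<equiv> torus \<times> torus"

text \<open>Small open sets: the preimage under pi is a disjoint union of (open, hence
  unions of connected components) pieces V, each mapped bijectively onto U.\<close>
definition small :: "((complex^'n) \<times> (complex^'n)) set \<Rightarrow> bool" where
  "small U \<longleftrightarrow> openin (top_of_set TT) U \<and>
     (\<exists>\<V>. disjoint \<V> \<and> \<Union>\<V> = qmap -` U \<and>
          (\<forall>V\<in>\<V>. open V \<and> bij_betw qmap V U))"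

definition tpre :: "(complex^'n) set set \<Rightarrow> (complex^'n) \<times> (complex^'n) \<Rightarrow> (complex^'n) \<times> (complex^'n) \<Rightarrow> bool" where
  "tpre S c d \<longleftrightarrow> (\<forall>H\<in>S. d \<in> H \<times> H \<longrightarrow> c \<in> H \<times> H)"

definition adapted :: "(complex^'n) set set \<Rightarrow>
    ((complex^'n) \<times> (complex^'n) \<Rightarrow> ((complex^'n) \<times> (complex^'n)) set) \<Rightarrow> bool" where
  "adapted S U \<longleftrightarrow>
     (\<Union>c\<in>TT. U c) = TT \<and>
     (\<forall>c\<in>TT. c \<in> U c \<and> small (U c)) \<and>
     (\<forall>c\<in>TT. \<forall>d\<in>TT. U c \<inter> U d \<noteq> {} \<longrightarrow> tpre S c d \<or> tpre S d c) \<and>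
     (\<forall>c\<in>TT. \<forall>d\<in>TT. \<forall>H\<in>S. tpre S c d \<and> c \<in> H \<times> H \<and> d \<notin> H \<times> H
         \<longrightarrow> U d \<inter> (H \<times> H) = {}) \<and>
     (\<forall>c\<in>TT. \<forall>d\<in>TT. \<forall>H\<in>S. c \<in> H \<times> H \<and> d \<in> H \<times> H \<and> U c \<inter> U d \<noteq> {}
         \<longrightarrow> connected_component (H \<times> H) c d)"

definition refinement ::
   "((complex^'n) \<times> (complex^'n) \<Rightarrow> ((complex^'n) \<times> (complex^'n)) set) \<Rightarrow>
    ((complex^'n) \<times> (complex^'n) \<Rightarrow> ((complex^'n) \<times> (complex^'n)) set) \<Rightarrow> bool" where
  "refinement U' U \<longleftrightarrow>
     (\<Union>c\<in>TT. U' c) = TT \<and>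
     (\<forall>c\<in>TT. openin (top_of_set TT) (U' c) \<and> c \<in> U' c \<and> U' c \<subseteq> U c)"

end

theory Submission
  imports Defs
begin

definition e1 :: "real \<Rightarrow> complex" where
  "e1 t = exp (2 * of_real pi * \<i> * of_real t)"

lemma tmap_nth: "tmap x $ i = e1 (x $ i)"
  by (simp add: tmap_def e1_def)

lemma e1_add: "e1 (s + t) = e1 s * e1 t"
  by (simp add: e1_def distrib_left exp_add)

lemma e1_norm: "cmod (e1 t) = 1"
  by (simp add: e1_def norm_exp_eq_Re)

lemma e1_zero: "e1 0 = 1"
  by (simp add: e1_def)

lemma e1_neq0: "e1 t \<noteq> 0"
  using e1_norm[of t] by auto

lemma e1_diff: "e1 (s - t) = e1 s / e1 t"
  using e1_add[of "s - t" t] e1_neq0[of t] by (simp add: field_simps)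

lemma e1_eq_1: "e1 t = 1 \<longleftrightarrow> t \<in> \<int>"
proof
  assume "e1 t = 1"
  then obtain n :: int where "2 * pi * t = of_int (2 * n) * pi"
    unfolding e1_def exp_eq_1 by auto
  then have "t = of_int n" by simp
  then show "t \<in> \<int>" by simp
next
  assume "t \<in> \<int>"
  then obtain n :: int where "t = of_int n" by (auto elim: Ints_cases)
  then show "e1 t = 1" unfolding e1_def exp_eq_1 by (auto intro!: exI[of _ n])
qed

lemma e1_eq: "e1 s = e1 t \<longleftrightarrow> s - t \<in> \<int>"
  using e1_diff[of s t] e1_eq_1[of "s - t"] e1_neq0[of t] by auto

lemma e1_cont: "continuous_on A e1"
  unfolding e1_def by (intro continuous_intros)

lemma isCont_e1: "isCont e1 t"
  unfolding e1_def by (intro continuous_intros)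

lemma e1_lift: assumes "cmod z = 1" shows "e1 (Im (Ln z) / (2 * pi)) = z"
proof -
  have z0: "z \<noteq> 0" using assms by auto
  have "Ln z = \<i> * of_real (Im (Ln z))"
    using assms z0 by (simp add: complex_eq_iff)
  then have "exp (\<i> * of_real (Im (Ln z))) = z" using z0 by (metis exp_Ln)
  then show ?thesis unfolding e1_def by simp
qed

lemma lift_local:
  assumes "\<epsilon> > 0"
  shows "\<exists>\<eta>>0. \<forall>z. cmod z = 1 \<and> cmod (z - 1) < \<eta> \<longrightarrow> (\<exists>\<theta>. \<bar>\<theta>\<bar> < \<epsilon> \<and> e1 \<theta> = z)"
proof -
  have "isCont Ln 1" by (rule continuous_at_Ln) auto
  then obtain \<eta> where h: "\<eta> > 0" "\<And>z. dist z 1 < \<eta> \<Longrightarrow> dist (Ln z) (Ln 1) < 2 * pi * \<epsilon>"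
    using assms unfolding continuous_at_eps_delta by (metis mult_pos_pos pi_gt_zero zero_less_numeral)
  show ?thesis
  proof (rule exI[of _ \<eta>], intro conjI allI impI)
    fix z assume z: "cmod z = 1 \<and> cmod (z - 1) < \<eta>"
    then have "cmod (Ln z) < 2 * pi * \<epsilon>" using h(2)[of z] by (simp add: dist_norm)
    then have "\<bar>Im (Ln z)\<bar> < 2 * pi * \<epsilon>" using abs_Im_le_cmod le_less_trans by blast
    then have "\<bar>Im (Ln z) / (2 * pi)\<bar> < \<epsilon>" by (simp add: field_simps)
    then show "\<exists>\<theta>. \<bar>\<theta>\<bar> < \<epsilon> \<and> e1 \<theta> = z" using e1_lift z by blast
  qed (use h in auto)
qed


lemma closed_subgroup_small:
  fixes L :: "'a::euclidean_space set"
  assumes cl: "closed L" and z: "0 \<in> L" and add: "\<And>x y. x\<in>L \<Longrightarrow> y\<in>L \<Longrightarrow> x+y \<in> L"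
    and neg: "\<And>x. x\<in>L \<Longrightarrow> -x \<in> L"
  shows "\<exists>\<epsilon>>0. \<forall>x\<in>L. norm x < \<epsilon> \<longrightarrow> (\<forall>t. t *\<^sub>R x \<in> L)"
proof (rule ccontr)
  have diff: "x - y \<in> L" if "x \<in> L" "y \<in> L" for x y
    using add[OF that(1) neg[OF that(2)]] by simp
  have natm: "of_nat m *\<^sub>R x \<in> L" if "x \<in> L" for x m
    by (induction m) (auto simp: z add that scaleR_add_left)
  have intm: "of_int m *\<^sub>R x \<in> L" if "x \<in> L" for x m
  proof (cases "m \<ge> 0")
    case True then show ?thesis using natm[OF that, of "nat m"] by simp
  next
    case False then show ?thesis using neg[OF natm[OF that, of "nat (-m)"]] by simp
  qed
  define V where "V = {x. \<forall>t. t *\<^sub>R x \<in> L}"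
  have VL: "V \<subseteq> L" unfolding V_def using scaleR_one by (metis (mono_tags, lifting) mem_Collect_eq subsetI)
  have V0: "0 \<in> V" using z by (simp add: V_def)
  have Vadd: "x + y \<in> V" if "x \<in> V" "y \<in> V" for x y
    using that add by (auto simp: V_def scaleR_add_right)
  have Vsc: "s *\<^sub>R x \<in> V" if "x \<in> V" for x s
    using that by (auto simp: V_def)
  have Vcl: "closed V"
  proof -
    have "V = (\<Inter>t. (\<lambda>x. t *\<^sub>R x) -` L)" by (auto simp: V_def)
    moreover have "closed ((\<lambda>x. t *\<^sub>R x) -` L)" for t
      by (intro continuous_closed_vimage cl continuous_intros)
    ultimately show ?thesis by auto
  qed
  assume neg: "\<not> ?thesis"
  have ex: "\<exists>y. y \<in> L \<and> norm y < 1 / Suc k \<and> y \<notin> V" for k :: nat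
  proof -
    have pos: "(1::real) / Suc k > 0" by simp
    have nn: "\<not> (\<forall>y\<in>L. norm y < 1 / Suc k \<longrightarrow> (\<forall>t. t *\<^sub>R y \<in> L))"
    proof
      assume a: "\<forall>y\<in>L. norm y < 1 / Suc k \<longrightarrow> (\<forall>t. t *\<^sub>R y \<in> L)"
      have "\<exists>\<epsilon>>0. \<forall>x\<in>L. norm x < \<epsilon> \<longrightarrow> (\<forall>t. t *\<^sub>R x \<in> L)"
        by (rule exI[of _ "1 / Suc k"]) (use pos a in simp)
      then show False using neg by simp
    qed
    then obtain y where "y \<in> L" "norm y < 1 / Suc k" "\<not> (\<forall>t. t *\<^sub>R y \<in> L)"
      by auto
    then show ?thesis unfolding V_def by auto
  qed
  define x where "x k = (SOME y. y \<in> L \<and> norm y < 1 / Suc k \<and> y \<notin> V)" for k :: nat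
  have xk: "x k \<in> L \<and> norm (x k) < 1 / Suc k \<and> x k \<notin> V" for k
    unfolding x_def by (rule someI_ex[OF ex])
  have x: "\<And>k. x k \<in> L" "\<And>k. norm (x k) < 1 / Suc k" "\<And>k. x k \<notin> V"
    using xk by auto
  have exp: "\<exists>p. p \<in> V \<and> (\<forall>y\<in>V. dist (x k) p \<le> dist (x k) y)" for k
  proof -
    obtain p0 where "p0 \<in> V" "\<And>y. y \<in> V \<Longrightarrow> dist (x k) p0 \<le> dist (x k) y"
      using distance_attains_inf[OF Vcl, of "x k"] V0 by auto
    then show ?thesis by auto
  qed
  define p where "p k = (SOME p. p \<in> V \<and> (\<forall>y\<in>V. dist (x k) p \<le> dist (x k) y))" for k
  have pk: "p k \<in> V \<and> (\<forall>y\<in>V. dist (x k) (p k) \<le> dist (x k) y)" for k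
    unfolding p_def by (rule someI_ex[OF exp])
  have p: "\<And>k. p k \<in> V" "\<And>k y. y \<in> V \<Longrightarrow> dist (x k) (p k) \<le> dist (x k) y"
    using pk by auto
  define q where "q k = x k - p k" for k
  have qL: "q k \<in> L" for k using diff[OF x(1) subsetD[OF VL p(1)]] by (simp add: q_def)
  have qV: "q k \<notin> V" for k
  proof
    assume "q k \<in> V"
    then have "q k + p k \<in> V" using Vadd p(1) by blast
    then show False using x(3) by (simp add: q_def)
  qed
  have q0: "q k \<noteq> 0" for k
  proof
    assume "q k = 0"
    then show False using qV[of k] V0 by simp
  qed
  have qle: "norm (q k) \<le> norm (x k)" for k
    using p(2)[OF V0, of k] by (simp add: q_def dist_norm)
  have qmin: "norm (q k) \<le> norm (q k - v)" if "v \<in> V" for k v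
    using p(2)[OF Vadd[OF p(1) that], of k] by (simp add: q_def dist_norm diff_diff_eq)
  define u where "u k = q k /\<^sub>R norm (q k)" for k
  have un: "u k \<in> sphere 0 1" for k using q0 by (simp add: u_def)
  have umin: "1 \<le> norm (u k - v)" if "v \<in> V" for k v
  proof -
    have nq: "norm (q k) > 0" using q0 by simp
    have "norm (q k) \<le> norm (q k - norm (q k) *\<^sub>R v)" using qmin[OF Vsc[OF that, of "norm (q k)"], of k] .
    also have "q k - norm (q k) *\<^sub>R v = norm (q k) *\<^sub>R (u k - v)"
    proof -
      have "norm (q k) *\<^sub>R u k = q k" using nq by (simp add: u_def)
      then show ?thesis by (simp add: scaleR_diff_right)
    qed
    finally have "norm (q k) * 1 \<le> norm (q k) * norm (u k - v)" using nq by simp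
    then show ?thesis using nq by simp
  qed
  obtain l r where l: "l \<in> sphere 0 1" "strict_mono r" "(u \<circ> r) \<longlonglongrightarrow> l"
  proof -
    have "\<exists>l\<in>sphere 0 1. \<exists>r. strict_mono r \<and> (u \<circ> r) \<longlonglongrightarrow> l"
      using compact_sphere[of "0::'a" 1, unfolded compact_def, rule_format, of u] un by blast
    then show ?thesis using that by blast
  qed
  have lmin: "1 \<le> norm (l - v)" if "v \<in> V" for v
  proof (rule LIMSEQ_le_const)
    show "(\<lambda>j. norm ((u \<circ> r) j - v)) \<longlonglongrightarrow> norm (l - v)"
      by (intro tendsto_intros l(3))
    show "\<exists>N. \<forall>n\<ge>N. 1 \<le> norm ((u \<circ> r) n - v)" using umin[OF that] by simp
  qed
  have nq0: "(\<lambda>j. norm (q (r j))) \<longlonglongrightarrow> 0"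
  proof (rule Lim_null_comparison)
    show "\<forall>\<^sub>F j in sequentially. norm (norm (q (r j))) \<le> inverse (real (Suc j))"
    proof (intro always_eventually allI)
      fix j
      have "norm (q (r j)) < 1 / Suc (r j)" using qle[of "r j"] x(2)[of "r j"] by linarith
      also have "\<dots> \<le> 1 / Suc j" using seq_suble[OF l(2), of j]
        by (intro divide_left_mono) auto
      finally show "norm (norm (q (r j))) \<le> inverse (real (Suc j))" by (simp add: divide_inverse)
    qed
    show "(\<lambda>j. inverse (real (Suc j))) \<longlonglongrightarrow> 0" by (rule LIMSEQ_inverse_real_of_nat)
  qed
  have "l \<in> V"
    unfolding V_def
  proof (intro CollectI allI)
    fix t :: real
    define y where "y j = of_int \<lfloor>t / norm (q (r j))\<rfloor> *\<^sub>R q (r j)" for j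
    have yL: "y j \<in> L" for j unfolding y_def by (rule intm[OF qL])
    have "(\<lambda>j. y j - t *\<^sub>R (u \<circ> r) j) \<longlonglongrightarrow> 0"
    proof (rule Lim_null_comparison)
      show "\<forall>\<^sub>F j in sequentially. norm (y j - t *\<^sub>R (u \<circ> r) j) \<le> norm (q (r j))"
      proof (intro always_eventually allI)
        fix j
        let ?n = "norm (q (r j))"
        have nq: "?n > 0" using q0 by simp
        have tu: "t *\<^sub>R (u \<circ> r) j = (t / ?n) *\<^sub>R q (r j)"
          by (simp add: u_def divide_inverse)
        have eq: "y j - t *\<^sub>R (u \<circ> r) j = (of_int \<lfloor>t / ?n\<rfloor> - t / ?n) *\<^sub>R q (r j)"
          unfolding tu y_def by (rule scaleR_diff_left[symmetric])
        have f1: "of_int \<lfloor>t / ?n\<rfloor> \<le> t / ?n" by (rule of_int_floor_le)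
        have f2: "t / ?n < of_int \<lfloor>t / ?n\<rfloor> + 1" by (rule real_of_int_floor_add_one_gt)
        have ab: "\<bar>of_int \<lfloor>t / ?n\<rfloor> - t / ?n\<bar> \<le> 1"
          using f1 f2 by linarith
        have "norm (y j - t *\<^sub>R (u \<circ> r) j) = \<bar>of_int \<lfloor>t / ?n\<rfloor> - t / ?n\<bar> * ?n"
          unfolding eq by simp
        also have "\<dots> \<le> ?n" by (rule mult_left_le_one_le) (use ab in auto)
        finally show "norm (y j - t *\<^sub>R (u \<circ> r) j) \<le> ?n" .
      qed
      show "(\<lambda>j. norm (q (r j))) \<longlonglongrightarrow> 0" by (rule nq0)
    qed
    moreover have "(\<lambda>j. t *\<^sub>R (u \<circ> r) j) \<longlonglongrightarrow> t *\<^sub>R l"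
      using l(3) by (rule tendsto_scaleR[OF tendsto_const])
    ultimately have "(\<lambda>j. (y j - t *\<^sub>R (u \<circ> r) j) + t *\<^sub>R (u \<circ> r) j) \<longlonglongrightarrow> 0 + t *\<^sub>R l"
      by (rule tendsto_add)
    then have yt: "y \<longlonglongrightarrow> t *\<^sub>R l" by simp
    show "t *\<^sub>R l \<in> L" by (rule closed_sequentially[OF cl, of y "t *\<^sub>R l", OF yL yt])
  qed
  then show False using lmin[of l] by simp
qed


lemma tmap_cont: "continuous_on S tmap"
  unfolding tmap_def by (intro continuous_intros)

lemma isCont_tmap: "isCont tmap x"
  using tmap_cont[of UNIV] by (auto simp: continuous_on_eq_continuous_at)

lemma tmap_add: "tmap (x + y) = (\<chi> i. tmap x $ i * tmap y $ i)"
  by (simp add: vec_eq_iff tmap_nth e1_add)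

lemma tmap_zero: "tmap 0 = (\<chi> i. 1)"
  by (simp add: vec_eq_iff tmap_nth e1_zero)

lemma e1_minus: "e1 (- t) = inverse (e1 t)"
  using e1_diff[of 0 t] by (simp add: e1_zero divide_inverse)

lemma tmap_neg: "tmap (- x) = (\<chi> i. inverse (tmap x $ i))"
  by (simp add: vec_eq_iff tmap_nth e1_minus)

lemma tmap_torus: "tmap x \<in> torus"
  by (simp add: torus_def tmap_nth e1_norm)

lemma subgroup_local_conn:
  fixes H :: "(complex^'n) set"
  assumes "closed_subgroup H"
  shows "\<exists>\<delta>>0. \<forall>h\<in>H. \<forall>h'\<in>H. dist h h' < \<delta> \<longrightarrow> connected_component H h h'"
proof -
  have Ht: "H \<subseteq> torus" and cl: "closed H" and one: "(\<chi> i. 1) \<in> H"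
    and mul: "\<And>x y. x\<in>H \<Longrightarrow> y\<in>H \<Longrightarrow> (\<chi> i. x $ i * y $ i) \<in> H"
    and inv: "\<And>x. x\<in>H \<Longrightarrow> (\<chi> i. inverse (x $ i)) \<in> H"
    using assms unfolding closed_subgroup_def by auto
  define L where "L = {x::real^'n. tmap x \<in> H}"
  have Lcl: "closed L" unfolding L_def
    using continuous_closed_vimage[OF cl isCont_tmap] by (simp add: vimage_def)
  obtain \<epsilon> where \<epsilon>: "\<epsilon> > 0" "\<And>x. x\<in>L \<Longrightarrow> norm x < \<epsilon> \<Longrightarrow> (\<forall>t. t *\<^sub>R x \<in> L)"
  proof -
    have "\<exists>\<epsilon>>0. \<forall>x\<in>L. norm x < \<epsilon> \<longrightarrow> (\<forall>t. t *\<^sub>R x \<in> L)"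
    proof (rule closed_subgroup_small[OF Lcl])
      show "0 \<in> L" using one by (simp add: L_def tmap_zero)
      show "x + y \<in> L" if "x \<in> L" "y \<in> L" for x y
        using mul that by (simp add: L_def tmap_add)
      show "- x \<in> L" if "x \<in> L" for x
        using inv that by (simp add: L_def tmap_neg)
    qed
    then show ?thesis using that by blast
  qed
  have cardpos: "real CARD('n) > 0" by simp
  obtain \<eta> where \<eta>: "\<eta> > 0"
    "\<And>z. cmod z = 1 \<Longrightarrow> cmod (z - 1) < \<eta> \<Longrightarrow> (\<exists>\<theta>. \<bar>\<theta>\<bar> < \<epsilon> / CARD('n) \<and> e1 \<theta> = z)"
    using lift_local[of "\<epsilon> / CARD('n)"] \<epsilon>(1) cardpos by auto
  show ?thesis
  proof (rule exI[of _ \<eta>], intro conjI ballI impI)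
    show "\<eta> > 0" by (rule \<eta>(1))
    fix h h' assume hH: "h \<in> H" and h'H: "h' \<in> H" and d: "dist h h' < \<eta>"
    define z where "z = (\<chi> i. h' $ i * inverse (h $ i))"
    have zH: "z \<in> H" using mul[OF h'H inv[OF hH]] by (simp add: z_def)
    have hn: "cmod (h $ i) = 1" for i using hH Ht by (auto simp: torus_def)
    have h'n: "cmod (h' $ i) = 1" for i using h'H Ht by (auto simp: torus_def)
    have h0: "h $ i \<noteq> 0" for i using hn[of i] by auto
    have "\<exists>\<theta>. \<bar>\<theta>\<bar> < \<epsilon> / CARD('n) \<and> e1 \<theta> = z $ i" for i
    proof (rule \<eta>(2))
      show "cmod (z $ i) = 1" using hn h'n by (simp add: z_def norm_mult norm_inverse)
      have "z $ i - 1 = (h' $ i - h $ i) * inverse (h $ i)"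
        using h0[of i] by (simp add: z_def field_simps)
      then have "cmod (z $ i - 1) = cmod (h' $ i - h $ i)"
        using hn[of i] by (simp add: norm_mult norm_inverse)
      also have "\<dots> \<le> norm (h' - h)" using Finite_Cartesian_Product.norm_nth_le[of "h' - h" i] by simp
      also have "\<dots> < \<eta>" using d by (simp add: dist_norm norm_minus_commute)
      finally show "cmod (z $ i - 1) < \<eta>" .
    qed
    then obtain th where th: "\<And>i. \<bar>th i\<bar> < \<epsilon> / CARD('n)" "\<And>i. e1 (th i) = z $ i"
      by metis
    define v where "v = (\<chi> i. th i)"
    have "tmap v = z" by (simp add: vec_eq_iff tmap_nth v_def th(2))
    then have vL: "v \<in> L" using zH by (simp add: L_def)
    have "norm v \<le> (\<Sum>i\<in>UNIV. \<bar>v $ i\<bar>)" by (rule norm_le_l1_cart)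
    also have "\<dots> < (\<Sum>i\<in>(UNIV::'n set). \<epsilon> / CARD('n))"
      by (rule sum_strict_mono) (auto simp: v_def th(1))
    also have "\<dots> = \<epsilon>" using cardpos by simp
    finally have "norm v < \<epsilon>" .
    then have tv: "\<And>t. t *\<^sub>R v \<in> L" using \<epsilon>(2)[OF vL] by blast
    define \<gamma> where "\<gamma> t = (\<chi> i. h $ i * e1 (t * th i))" for t
    have gH: "\<gamma> t \<in> H" for t
    proof -
      have "(\<chi> i. h $ i * tmap (t *\<^sub>R v) $ i) \<in> H" using mul[OF hH] tv[of t] by (simp add: L_def)
      then show ?thesis by (simp add: \<gamma>_def tmap_nth v_def)
    qed
    have conn: "connected (\<gamma> ` {0..1})"
      by (rule connected_continuous_image) (auto simp: \<gamma>_def e1_def intro!: continuous_intros)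
    have g0: "\<gamma> 0 = h" by (simp add: \<gamma>_def vec_eq_iff e1_zero)
    have g1: "\<gamma> 1 = h'" using h0 by (simp add: \<gamma>_def vec_eq_iff th(2) z_def)
    have T: "\<gamma> ` {0..1} \<subseteq> H" using gH by blast
    have hin: "h \<in> \<gamma> ` {0..1}"
    proof (rule image_eqI[of _ _ 0])
      show "h = \<gamma> 0" using g0 by simp
    qed simp
    have h'in: "h' \<in> \<gamma> ` {0..1}"
    proof (rule image_eqI[of _ _ 1])
      show "h' = \<gamma> 1" using g1 by simp
    qed simp
    show "connected_component H h h'"
      unfolding connected_component_def using conn T hin h'in by blast
  qed
qed


lemma Ints_close_eq:
  assumes "a \<in> \<int>" "b \<in> \<int>" "\<bar>a - b\<bar> < 1" shows "a = (b::real)"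
proof -
  obtain m n :: int where mn: "a = of_int m" "b = of_int n" using assms(1,2) by (auto elim!: Ints_cases)
  then have "of_int \<bar>m - n\<bar> < (1::real)" using assms(3) by simp
  then have "\<bar>m - n\<bar> < 1" by (simp only: of_int_less_1_iff)
  then have "m = n" by linarith
  then show ?thesis using mn by simp
qed

lemma choose_fun: assumes "\<And>i. \<exists>x. P i x" shows "\<exists>f. \<forall>i. P i (f i)"
proof (intro exI[of _ "\<lambda>i. SOME x. P i x"] allI)
  fix i show "P i (SOME x. P i x)" by (rule someI_ex[OF assms])
qed

lemma lift_pieces:
  fixes c :: "complex^'n"
  assumes c: "c \<in> torus" and r: "0 < r"
    and \<eta>: "\<And>z. cmod z = 1 \<Longrightarrow> cmod (z - 1) < r \<Longrightarrow> \<exists>\<theta>. \<bar>\<theta>\<bar> < 1/4 \<and> e1 \<theta> = z"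
  shows "\<exists>\<V>. disjoint \<V> \<and> \<Union>\<V> = tmap -` (torus \<inter> ball c r) \<and>
            (\<forall>V\<in>\<V>. open V \<and> bij_betw tmap V (torus \<inter> ball c r))"
proof -
  let ?W = "torus \<inter> ball c r"
  have cn: "cmod (c $ i) = 1" for i using c by (auto simp: torus_def)
  have c0: "c $ i \<noteq> 0" for i using cn[of i] by auto
  have "\<exists>a. e1 a = c $ i" for i using e1_lift[OF cn[of i]] by blast
  then obtain af where af0: "\<forall>i. e1 (af i) = c $ i"
    using choose_fun[of "\<lambda>i a. e1 a = c $ i"] by blast
  have af: "e1 (af i) = c $ i" for i using af0 by blast
  define a where "a = (\<chi> i. af i)"
  have a: "e1 (a $ i) = c $ i" for i by (simp add: a_def af)
  have liftW: "\<exists>\<theta>. \<bar>\<theta>\<bar> < 1/4 \<and> e1 \<theta> = w $ i / c $ i" if "w \<in> ?W" for w i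
  proof (rule \<eta>)
    have wn: "cmod (w $ i) = 1" using that by (auto simp: torus_def)
    show "cmod (w $ i / c $ i) = 1" using wn cn by (simp add: norm_divide)
    have "w $ i / c $ i - 1 = (w $ i - c $ i) / c $ i" using c0[of i] by (simp add: field_simps)
    then have "cmod (w $ i / c $ i - 1) = cmod (w $ i - c $ i)" using cn[of i] by (simp add: norm_divide)
    also have "\<dots> \<le> norm (w - c)" using Finite_Cartesian_Product.norm_nth_le[of "w - c" i] by simp
    also have "\<dots> < r" using that by (simp add: dist_norm norm_minus_commute)
    finally show "cmod (w $ i / c $ i - 1) < r" .
  qed
  define P where "P k = tmap -` ball c r \<inter> {x. \<forall>i. \<bar>x $ i - a $ i - k $ i\<bar> < 1/4}" for k :: "real^'n"
  define \<V> where "\<V> = {P k | k. \<forall>i. k $ i \<in> \<int>}"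
  have Pin: "x \<in> P k \<longleftrightarrow> tmap x \<in> ball c r \<and> (\<forall>i. \<bar>x $ i - a $ i - k $ i\<bar> < 1/4)" for x k
    by (simp add: P_def)
  have PW: "tmap x \<in> ?W" if "x \<in> P k" for x k using that tmap_torus by (auto simp: Pin)
  have Popen: "open (P k)" for k
  proof -
    have "open (tmap -` ball c r)"
      by (rule open_vimage[OF open_ball tmap_cont])
    moreover have "{x. \<forall>i. \<bar>x $ i - a $ i - k $ i\<bar> < 1/4} = (\<Inter>i\<in>UNIV. {x::real^'n. \<bar>x $ i - a $ i - k $ i\<bar> < 1/4})"
      by auto
    moreover have "open {x::real^'n. \<bar>x $ i - a $ i - k $ i\<bar> < 1/4}" for i
      by (intro open_Collect_less continuous_intros)
    moreover have "open (\<Inter>i\<in>UNIV. {x::real^'n. \<bar>x $ i - a $ i - k $ i\<bar> < 1/4})"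
      by (rule open_INT) (use calculation(3) in auto)
    ultimately show ?thesis unfolding P_def by (simp only: open_Int)
  qed
  have disj: "disjoint \<V>"
    unfolding pairwise_def disjnt_def
  proof (intro ballI impI)
    fix A B assume "A \<in> \<V>" "B \<in> \<V>" "A \<noteq> B"
    then obtain k k' where A: "A = P k" "\<forall>i. k $ i \<in> \<int>" and B: "B = P k'" "\<forall>i. k' $ i \<in> \<int>"
      by (auto simp: \<V>_def)
    show "A \<inter> B = {}"
    proof (rule ccontr)
      assume "A \<inter> B \<noteq> {}"
      then obtain x where xk: "x \<in> P k" "x \<in> P k'" using A B by auto
      have "\<bar>k $ i - k' $ i\<bar> < 1" for i
      proof -
        have "\<bar>x $ i - a $ i - k $ i\<bar> < 1/4" "\<bar>x $ i - a $ i - k' $ i\<bar> < 1/4"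
          using xk unfolding Pin by blast+
        then show ?thesis by linarith
      qed
      then have "k $ i = k' $ i" for i using Ints_close_eq A(2) B(2) by blast
      then have "k = k'" by (simp add: vec_eq_iff)
      then show False using A B \<open>A \<noteq> B\<close> by simp
    qed
  qed
  have un: "\<Union>\<V> = tmap -` ?W"
  proof
    show "\<Union>\<V> \<subseteq> tmap -` ?W" using PW by (auto simp: \<V>_def)
    show "tmap -` ?W \<subseteq> \<Union>\<V>"
    proof
      fix x assume x: "x \<in> tmap -` ?W"
      have "\<exists>\<theta>. \<bar>\<theta>\<bar> < 1/4 \<and> e1 \<theta> = tmap x $ i / c $ i" for i using liftW x by blast
      then obtain th where th0: "\<forall>i. \<bar>th i\<bar> < 1/4 \<and> e1 (th i) = tmap x $ i / c $ i"
        using choose_fun[of "\<lambda>i t. \<bar>t\<bar> < 1/4 \<and> e1 t = tmap x $ i / c $ i"] by blast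
      have th: "\<And>i. \<bar>th i\<bar> < 1/4" "\<And>i. e1 (th i) = tmap x $ i / c $ i" using th0 by auto
      define k where "k = (\<chi> i. x $ i - a $ i - th i)"
      have "e1 (x $ i - a $ i) = e1 (th i)" for i
        by (simp add: e1_diff a th(2) tmap_nth)
      then have kI: "k $ i \<in> \<int>" for i
        unfolding k_def using e1_eq by (simp add: diff_diff_eq)
      have "x \<in> P k" using x th(1) by (simp add: Pin k_def)
      then show "x \<in> \<Union>\<V>" using kI by (auto simp: \<V>_def)
    qed
  qed
  have bij: "bij_betw tmap V ?W" if VV: "V \<in> \<V>" for V
  proof -
    obtain k where V: "V = P k" and kI: "\<forall>i. k $ i \<in> \<int>" using VV unfolding \<V>_def by blast
    show ?thesis unfolding bij_betw_def
    proof (intro conjI)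
      show "inj_on tmap V"
      proof (rule inj_onI)
        fix x y assume "x \<in> V" "y \<in> V" "tmap x = tmap y"
        then have xy: "x \<in> P k" "y \<in> P k" "\<And>i. e1 (x $ i) = e1 (y $ i)"
          using V by (auto simp: vec_eq_iff tmap_nth)
        have "x $ i = y $ i" for i
        proof -
          have "x $ i - y $ i \<in> \<int>" using xy(3) e1_eq by blast
          moreover have "\<bar>(x $ i - y $ i) - 0\<bar> < 1"
          proof -
            have "\<bar>x $ i - a $ i - k $ i\<bar> < 1/4" "\<bar>y $ i - a $ i - k $ i\<bar> < 1/4"
              using xy(1,2) unfolding Pin by blast+
            then show ?thesis by linarith
          qed
          ultimately have "x $ i - y $ i = 0" using Ints_close_eq[of "x $ i - y $ i" 0] by simp
          then show ?thesis by simp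
        qed
        then show "x = y" by (simp add: vec_eq_iff)
      qed
      show "tmap ` V = ?W"
      proof
        show "tmap ` V \<subseteq> ?W" using PW V by auto
        show "?W \<subseteq> tmap ` V"
        proof
          fix w assume w: "w \<in> ?W"
          have "\<exists>\<theta>. \<bar>\<theta>\<bar> < 1/4 \<and> e1 \<theta> = w $ i / c $ i" for i using liftW w by blast
          then obtain th where th0: "\<forall>i. \<bar>th i\<bar> < 1/4 \<and> e1 (th i) = w $ i / c $ i"
            using choose_fun[of "\<lambda>i t. \<bar>t\<bar> < 1/4 \<and> e1 t = w $ i / c $ i"] by blast
          have th: "\<And>i. \<bar>th i\<bar> < 1/4" "\<And>i. e1 (th i) = w $ i / c $ i" using th0 by auto
          define x where "x = (\<chi> i. a $ i + k $ i + th i)"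
          have "e1 (k $ i) = 1" for i using kI e1_eq_1 by blast
          then have tx: "tmap x = w"
            using c0 by (simp add: vec_eq_iff tmap_nth x_def e1_add a th(2))
          have "x \<in> P k" using w th(1) by (simp add: Pin tx) (simp add: x_def)
          then show "w \<in> tmap ` V" using tx V by blast
        qed
      qed
    qed
  qed
  show ?thesis
    by (rule exI[of _ \<V>]) (use disj un bij Popen in \<open>auto simp: \<V>_def\<close>)
qed

lemma qmap_map_prod: "qmap = map_prod tmap tmap"
  by (rule ext) (auto simp: qmap_def)

lemma small_prod:
  fixes c1 c2 :: "complex^'n"
  assumes c: "c1 \<in> torus" "c2 \<in> torus" and r: "0 < r"
    and \<eta>: "\<And>z. cmod z = 1 \<Longrightarrow> cmod (z - 1) < r \<Longrightarrow> \<exists>\<theta>. \<bar>\<theta>\<bar> < 1/4 \<and> e1 \<theta> = z"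
  shows "small ((torus \<inter> ball c1 r) \<times> (torus \<inter> ball c2 r))"
proof -
  let ?W1 = "torus \<inter> ball c1 r" and ?W2 = "torus \<inter> ball c2 r"
  obtain V1 where V1: "disjoint V1" "\<Union>V1 = tmap -` ?W1" "\<And>V. V\<in>V1 \<Longrightarrow> open V \<and> bij_betw tmap V ?W1"
    using lift_pieces[OF c(1) r \<eta>] by blast
  obtain V2 where V2: "disjoint V2" "\<Union>V2 = tmap -` ?W2" "\<And>V. V\<in>V2 \<Longrightarrow> open V \<and> bij_betw tmap V ?W2"
    using lift_pieces[OF c(2) r \<eta>] by blast
  define \<V> where "\<V> = {A \<times> B | A B. A \<in> V1 \<and> B \<in> V2}"
  have op: "openin (top_of_set TT) (?W1 \<times> ?W2)"
  proof -
    have "?W1 \<times> ?W2 = TT \<inter> (ball c1 r \<times> ball c2 r)" by auto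
    then show ?thesis by (metis open_Times open_ball openin_open_Int)
  qed
  have disj: "disjoint \<V>"
    unfolding pairwise_def disjnt_def
  proof (intro ballI impI)
    fix X Y assume "X \<in> \<V>" "Y \<in> \<V>" "X \<noteq> Y"
    then obtain A B A' B' where X: "X = A \<times> B" "A \<in> V1" "B \<in> V2" and Y: "Y = A' \<times> B'" "A' \<in> V1" "B' \<in> V2"
      by (auto simp: \<V>_def)
    have "A \<noteq> A' \<or> B \<noteq> B'" using X Y \<open>X \<noteq> Y\<close> by auto
    then have "A \<inter> A' = {} \<or> B \<inter> B' = {}"
      using V1(1) V2(1) X Y unfolding pairwise_def disjnt_def by blast
    then show "X \<inter> Y = {}" using X Y by auto
  qed
  have un: "\<Union>\<V> = qmap -` (?W1 \<times> ?W2)"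
  proof -
    have "\<Union>\<V> = \<Union>V1 \<times> \<Union>V2" by (auto simp: \<V>_def)
    also have "\<dots> = qmap -` (?W1 \<times> ?W2)" unfolding V1(2) V2(2) by (auto simp: qmap_def)
    finally show ?thesis .
  qed
  have pc: "open V \<and> bij_betw qmap V (?W1 \<times> ?W2)" if VV: "V \<in> \<V>" for V
  proof -
    obtain A B where V: "V = A \<times> B" "A \<in> V1" "B \<in> V2" using VV unfolding \<V>_def by blast
    show ?thesis using V V1(3)[OF V(2)] V2(3)[OF V(3)]
      by (simp add: open_Times qmap_map_prod bij_betw_map_prod)
  qed
  show ?thesis unfolding small_def
    by (intro conjI op exI[of _ \<V>]) (use disj un pc in auto)
qed


lemma qmap_TT: "qmap p \<in> TT"
  by (simp add: qmap_def tmap_torus)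

lemma qmap_cont: "continuous_on UNIV qmap"
  unfolding qmap_def tmap_def by (intro continuous_intros)

lemma small_mono:
  assumes "small U" "openin (top_of_set TT) U'" "U' \<subseteq> U"
  shows "small U'"
proof -
  obtain \<V> where V: "disjoint \<V>" "\<Union>\<V> = qmap -` U" "\<And>V. V\<in>\<V> \<Longrightarrow> open V \<and> bij_betw qmap V U"
    using assms(1) unfolding small_def by blast
  obtain O' where O': "open O'" "U' = TT \<inter> O'" using assms(2) by (auto simp: openin_open)
  have pre: "qmap -` U' = qmap -` O'" using O'(2) qmap_TT by auto
  have opre: "open (qmap -` U')" unfolding pre
    using open_vimage[OF O'(1) qmap_cont] by simp
  define \<V>' where "\<V>' = (\<lambda>V. V \<inter> qmap -` U') ` \<V>"
  have d1: "disjoint \<V>'"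
    unfolding pairwise_def disjnt_def
  proof (intro ballI impI)
    fix X Y assume X: "X \<in> \<V>'" and Y: "Y \<in> \<V>'" and XY: "X \<noteq> Y"
    obtain A where A: "X = A \<inter> qmap -` U'" "A \<in> \<V>" using X unfolding \<V>'_def by blast
    obtain B where B: "Y = B \<inter> qmap -` U'" "B \<in> \<V>" using Y unfolding \<V>'_def by blast
    have "A \<noteq> B" using A B XY by blast
    then have "A \<inter> B = {}" using V(1) A(2) B(2) unfolding pairwise_def disjnt_def by blast
    then show "X \<inter> Y = {}" using A(1) B(1) by blast
  qed
  have d2: "\<Union>\<V>' = qmap -` U'"
  proof -
    have "\<Union>\<V>' = (\<Union>\<V>) \<inter> qmap -` U'" unfolding \<V>'_def by auto
    also have "\<dots> = qmap -` U \<inter> qmap -` U'" by (simp only: V(2))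
    also have "\<dots> = qmap -` U'" using assms(3) by auto
    finally show ?thesis .
  qed
  have d3: "open W \<and> bij_betw qmap W U'" if WW: "W \<in> \<V>'" for W
  proof -
    obtain V0 where W: "W = V0 \<inter> qmap -` U'" "V0 \<in> \<V>" using WW unfolding \<V>'_def by blast
    have b: "bij_betw qmap V0 U" using V(3)[OF W(2)] by blast
    have "qmap ` V0 = U" using bij_betw_imp_surj_on[OF b] .
    have "qmap ` W = qmap ` V0 \<inter> U'" unfolding W(1) by auto
    then have "qmap ` W = U'" using \<open>qmap ` V0 = U\<close> assms(3) by auto
    then have "bij_betw qmap W U'" using bij_betw_subset[OF b, of W U'] W(1) by blast
    moreover have "open W" using W(1) V(3)[OF W(2)] opre by (simp add: open_Int)
    ultimately show ?thesis by blast
  qed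
  have "\<exists>\<V>. disjoint \<V> \<and> \<Union>\<V> = qmap -` U' \<and> (\<forall>V\<in>\<V>. open V \<and> bij_betw qmap V U')"
    by (intro exI[of _ \<V>'] conjI ballI d1 d2 d3)
  then show ?thesis unfolding small_def using assms(2) by (intro conjI)
qed

lemma adapted_refine:
  fixes S :: "(complex^'n) set set"
  assumes "adapted S U" "refinement U' U"
  shows "adapted S U'"
proof -
  note rr = assms(2)[unfolded refinement_def]
  have r1: "(\<Union>c\<in>TT. U' c) = TT" by (rule conjunct1[OF rr])
  have r2: "openin (top_of_set TT) (U' c) \<and> c \<in> U' c \<and> U' c \<subseteq> U c" if "c \<in> TT" for c
    using conjunct2[OF rr] that by (rule bspec)
  note ad = assms(1)[unfolded adapted_def]
  note a1 = conjunct1[OF conjunct2[OF ad]]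
  note a2 = conjunct1[OF conjunct2[OF conjunct2[OF ad]]]
  note a3 = conjunct1[OF conjunct2[OF conjunct2[OF conjunct2[OF ad]]]]
  note a4 = conjunct2[OF conjunct2[OF conjunct2[OF conjunct2[OF ad]]]]
  have ne: "U c \<inter> U d \<noteq> {}" if "c \<in> TT" "d \<in> TT" "U' c \<inter> U' d \<noteq> {}" for c d
  proof -
    have "U' c \<subseteq> U c" "U' d \<subseteq> U d" using r2[OF that(1)] r2[OF that(2)] by simp_all
    then show ?thesis using that(3) by blast
  qed
  have g1: "\<forall>c\<in>TT. c \<in> U' c \<and> small (U' c)"
  proof
    fix c :: "(complex^'n) \<times> (complex^'n)" assume c: "c \<in> TT"
    have sm: "small (U c)" using bspec[OF a1 c] by (rule conjunct2)
    have "openin (top_of_set TT) (U' c)" "c \<in> U' c" "U' c \<subseteq> U c" using r2[OF c] by simp_all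
    then show "c \<in> U' c \<and> small (U' c)" using small_mono[OF sm] by simp
  qed
  have g2: "\<forall>c\<in>TT. \<forall>d\<in>TT. U' c \<inter> U' d \<noteq> {} \<longrightarrow> tpre S c d \<or> tpre S d c"
  proof (intro ballI impI)
    fix c d :: "(complex^'n) \<times> (complex^'n)" assume cd: "c \<in> TT" "d \<in> TT" "U' c \<inter> U' d \<noteq> {}"
    have "U c \<inter> U d \<noteq> {}" by (rule ne[OF cd])
    then show "tpre S c d \<or> tpre S d c" using bspec[OF bspec[OF a2 cd(1)] cd(2)] by (rule rev_mp)
  qed
  have g3: "\<forall>c\<in>TT. \<forall>d\<in>TT. \<forall>H\<in>S. tpre S c d \<and> c \<in> H \<times> H \<and> d \<notin> H \<times> H
         \<longrightarrow> U' d \<inter> (H \<times> H) = {}"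
  proof (intro ballI impI)
    fix c d :: "(complex^'n) \<times> (complex^'n)" and H
    assume cd: "c \<in> TT" "d \<in> TT" "H \<in> S" "tpre S c d \<and> c \<in> H \<times> H \<and> d \<notin> H \<times> H"
    have "U d \<inter> (H \<times> H) = {}" using bspec[OF bspec[OF bspec[OF a3 cd(1)] cd(2)] cd(3)] cd(4) by (rule mp)
    moreover have "U' d \<subseteq> U d" using r2[OF cd(2)] by simp
    ultimately show "U' d \<inter> (H \<times> H) = {}" by blast
  qed
  have g4: "\<forall>c\<in>TT. \<forall>d\<in>TT. \<forall>H\<in>S. c \<in> H \<times> H \<and> d \<in> H \<times> H \<and> U' c \<inter> U' d \<noteq> {}
         \<longrightarrow> connected_component (H \<times> H) c d"
  proof (intro ballI impI)
    fix c d :: "(complex^'n) \<times> (complex^'n)" and H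
    assume cd: "c \<in> TT" "d \<in> TT" "H \<in> S" "c \<in> H \<times> H \<and> d \<in> H \<times> H \<and> U' c \<inter> U' d \<noteq> {}"
    have "U c \<inter> U d \<noteq> {}" using ne[OF cd(1,2)] cd(4) by simp
    then show "connected_component (H \<times> H) c d"
      using bspec[OF bspec[OF bspec[OF a4 cd(1)] cd(2)] cd(3)] cd(4) by blast
  qed
  show ?thesis unfolding adapted_def using r1 g1 g2 g3 g4 by (intro conjI)
qed

lemma finite_min:
  assumes "finite S" "\<forall>H\<in>S. \<exists>r>0. \<forall>r'. 0 < r' \<and> r' \<le> r \<longrightarrow> P H r'"
  shows "\<exists>r>(0::real). \<forall>H\<in>S. \<forall>r'. 0 < r' \<and> r' \<le> r \<longrightarrow> P H r'"
  using assms
proof (induction S rule: finite_induct)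
  case empty then show ?case by (auto intro: exI[of _ 1])
next
  case (insert H S)
  then obtain r1 where r1: "r1 > 0" "\<forall>H\<in>S. \<forall>r'. 0 < r' \<and> r' \<le> r1 \<longrightarrow> P H r'" by auto
  obtain r2 where r2: "r2 > 0" "\<forall>r'. 0 < r' \<and> r' \<le> r2 \<longrightarrow> P H r'" using insert.prems by auto
  show ?case using r1 r2 by (intro exI[of _ "min r1 r2"]) auto
qed

lemma cc_times:
  assumes "connected_component A a b" "connected_component B a' b'"
  shows "connected_component (A \<times> B) (a, a') (b, b')"
proof -
  obtain T1 where "connected T1" "T1 \<subseteq> A" "a \<in> T1" "b \<in> T1"
    using assms(1) unfolding connected_component_def by blast
  moreover obtain T2 where "connected T2" "T2 \<subseteq> B" "a' \<in> T2" "b' \<in> T2"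
    using assms(2) unfolding connected_component_def by blast
  ultimately show ?thesis unfolding connected_component_def
    by (intro exI[of _ "T1 \<times> T2"]) (auto intro: connected_Times)
qed

lemma sep_radius:
  assumes "closed H" "x \<notin> H"
  shows "\<exists>e>0. \<forall>y\<in>H. e \<le> dist x y"
proof -
  have "open (- H)" using assms(1) by auto
  then obtain e where "e > 0" "ball x e \<subseteq> - H" using assms(2) open_contains_ball by blast
  then show ?thesis by (intro exI[of _ e]) (auto simp: subset_iff not_less)
qed

theorem main_aux:
  fixes S :: "(complex^'n) set set"
  assumes "finite S" and "\<forall>H\<in>S. closed_subgroup H"
  shows "\<exists>U. adapted S U"
proof -
  obtain \<eta>0 where \<eta>0: "\<eta>0 > 0"
    "\<And>z. cmod z = 1 \<and> cmod (z - 1) < \<eta>0 \<Longrightarrow> (\<exists>\<theta>. \<bar>\<theta>\<bar> < 1/4 \<and> e1 \<theta> = z)"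
    using lift_local[of "1/4"] by auto
  have exd: "\<exists>\<delta>. H \<in> S \<longrightarrow> \<delta> > 0 \<and> (\<forall>h\<in>H. \<forall>h'\<in>H. dist h h' < \<delta> \<longrightarrow> connected_component H h h')" for H
  proof (cases "H \<in> S")
    case True then show ?thesis using assms(2) subgroup_local_conn by blast
  qed simp
  obtain \<delta> where \<delta>0: "\<forall>H. H \<in> S \<longrightarrow> \<delta> H > 0 \<and> (\<forall>h\<in>H. \<forall>h'\<in>H. dist h h' < \<delta> H \<longrightarrow> connected_component H h h')"
    using choose_fun[of "\<lambda>H d. H \<in> S \<longrightarrow> d > 0 \<and> (\<forall>h\<in>H. \<forall>h'\<in>H. dist h h' < d \<longrightarrow> connected_component H h h')", OF exd]
    by blast
  have \<delta>: "\<And>H. H \<in> S \<Longrightarrow> \<delta> H > 0"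
    "\<And>H h h'. H \<in> S \<Longrightarrow> h \<in> H \<Longrightarrow> h' \<in> H \<Longrightarrow> dist h h' < \<delta> H \<Longrightarrow> connected_component H h h'"
    using \<delta>0 by blast+
  have clH: "closed H" if "H \<in> S" for H using assms(2) that by (auto simp: closed_subgroup_def)
  define P where "P c H r' \<longleftrightarrow> (fst c \<notin> H \<longrightarrow> (\<forall>y\<in>H. 3 * r' \<le> dist (fst c) y)) \<and>
             (snd c \<notin> H \<longrightarrow> (\<forall>y\<in>H. 3 * r' \<le> dist (snd c) y)) \<and> 2 * r' \<le> \<delta> H"
    for c :: "(complex^'n) \<times> (complex^'n)" and H r'
  define Q where "Q c r \<longleftrightarrow> 0 < r \<and> r \<le> \<eta>0 \<and> (\<forall>H\<in>S. P c H r)"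
    for c :: "(complex^'n) \<times> (complex^'n)" and r
  have exQ: "\<exists>r. Q c r" for c
  proof -
    have "\<forall>H\<in>S. \<exists>r>0. \<forall>r'. 0 < r' \<and> r' \<le> r \<longrightarrow> P c H r'"
    proof
      fix H assume H: "H \<in> S"
      have "\<exists>e>0. fst c \<notin> H \<longrightarrow> (\<forall>y\<in>H. e \<le> dist (fst c) y)"
      proof (cases "fst c \<in> H")
        case True then show ?thesis by (intro exI[of _ 1]) simp
      next
        case False then show ?thesis using sep_radius[OF clH[OF H], of "fst c"] by blast
      qed
      then obtain e1' where e1': "e1' > 0" "fst c \<notin> H \<longrightarrow> (\<forall>y\<in>H. e1' \<le> dist (fst c) y)"
        by blast
      have "\<exists>e>0. snd c \<notin> H \<longrightarrow> (\<forall>y\<in>H. e \<le> dist (snd c) y)"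
      proof (cases "snd c \<in> H")
        case True then show ?thesis by (intro exI[of _ 1]) simp
      next
        case False then show ?thesis using sep_radius[OF clH[OF H], of "snd c"] by blast
      qed
      then obtain e2' where e2': "e2' > 0" "snd c \<notin> H \<longrightarrow> (\<forall>y\<in>H. e2' \<le> dist (snd c) y)"
        by blast
      define r0 where "r0 = min (min (e1'/3) (e2'/3)) (\<delta> H / 2)"
      have r0: "r0 > 0" using e1'(1) e2'(1) \<delta>(1)[OF H] by (simp add: r0_def)
      have "P c H r'" if r': "0 < r' \<and> r' \<le> r0" for r'
      proof -
        have b: "3 * r' \<le> e1'" "3 * r' \<le> e2'" "2 * r' \<le> \<delta> H" using r' by (auto simp: r0_def)
        have "fst c \<notin> H \<longrightarrow> (\<forall>y\<in>H. 3 * r' \<le> dist (fst c) y)"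
          using e1'(2) b(1) by (meson order_trans)
        moreover have "snd c \<notin> H \<longrightarrow> (\<forall>y\<in>H. 3 * r' \<le> dist (snd c) y)"
          using e2'(2) b(2) by (meson order_trans)
        ultimately show ?thesis using b(3) unfolding P_def by blast
      qed
      then show "\<exists>r>0. \<forall>r'. 0 < r' \<and> r' \<le> r \<longrightarrow> P c H r'" using r0 by blast
    qed
    then obtain r where r: "r > 0" "\<forall>H\<in>S. \<forall>r'. 0 < r' \<and> r' \<le> r \<longrightarrow> P c H r'"
      using finite_min[OF assms(1), of "P c"] by blast
    have "Q c (min r \<eta>0)" unfolding Q_def using r \<eta>0(1) by simp
    then show ?thesis by blast
  qed
  define R where "R c = (SOME r. Q c r)" for c
  have RQ: "Q c (R c)" for c unfolding R_def by (rule someI_ex[OF exQ])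
  have Rpos: "R c > 0" for c using RQ[of c] by (simp add: Q_def P_def)
  have Rle: "R c \<le> \<eta>0" for c using RQ[of c] by (simp add: Q_def P_def)
  have R1: "\<And>H y. H \<in> S \<Longrightarrow> fst c \<notin> H \<Longrightarrow> y \<in> H \<Longrightarrow> 3 * R c \<le> dist (fst c) y" for c
    using RQ[of c] by (simp add: Q_def P_def)
  have R2: "\<And>H y. H \<in> S \<Longrightarrow> snd c \<notin> H \<Longrightarrow> y \<in> H \<Longrightarrow> 3 * R c \<le> dist (snd c) y" for c
    using RQ[of c] by (simp add: Q_def P_def)
  have R3: "\<And>H. H \<in> S \<Longrightarrow> 2 * R c \<le> \<delta> H" for c
    using RQ[of c] by (simp add: Q_def P_def)
  define U where "U c = (torus \<inter> ball (fst c) (R c)) \<times> (torus \<inter> ball (snd c) (R c))" for c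
  have UTT: "U c \<subseteq> TT" for c by (auto simp: U_def)
  have cU: "c \<in> TT \<Longrightarrow> c \<in> U c" for c using Rpos[of c] by (auto simp: U_def)
  have near: "dist (fst c) (fst d) < R c + R d \<and> dist (snd c) (snd d) < R c + R d"
    if "x \<in> U c" "x \<in> U d" for x c d
  proof -
    obtain a b where x: "x = (a, b)" by (cases x)
    have h: "dist (fst c) a < R c" "dist (fst d) a < R d" "dist (snd c) b < R c" "dist (snd d) b < R d"
      using that unfolding U_def x by (auto simp: dist_commute)
    show ?thesis using dist_triangle_less_add[OF h(1,2)] dist_triangle_less_add[OF h(3,4)] by blast
  qed
  have key: "tpre S c d \<and> (\<forall>H\<in>S. c \<in> H \<times> H \<and> d \<in> H \<times> H \<longrightarrow> connected_component (H \<times> H) c d)"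
    if "x \<in> U c" "x \<in> U d" "R d \<le> R c" for x c d
  proof
    have n1: "dist (fst c) (fst d) < 2 * R c" and n2: "dist (snd c) (snd d) < 2 * R c"
      using near[OF that(1,2)] that(3) by auto
    show "tpre S c d" unfolding tpre_def
    proof (intro ballI impI)
      fix H assume H: "H \<in> S" and dH: "d \<in> H \<times> H"
      show "c \<in> H \<times> H"
      proof (rule ccontr)
        assume "c \<notin> H \<times> H"
        then have "fst c \<notin> H \<or> snd c \<notin> H" by (cases c) auto
        then show False
          using R1[OF H _ , of c "fst d"] R2[OF H, of c "snd d"] dH n1 n2 Rpos[of c] by (cases d) auto
      qed
    qed
    show "\<forall>H\<in>S. c \<in> H \<times> H \<and> d \<in> H \<times> H \<longrightarrow> connected_component (H \<times> H) c d"
    proof (intro ballI impI)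
      fix H assume H: "H \<in> S" and cd: "c \<in> H \<times> H \<and> d \<in> H \<times> H"
      have "connected_component H (fst c) (fst d)"
        using \<delta>(2)[OF H, of "fst c" "fst d"] cd n1 R3[OF H, of c] by (cases c, cases d) auto
      moreover have "connected_component H (snd c) (snd d)"
        using \<delta>(2)[OF H, of "snd c" "snd d"] cd n2 R3[OF H, of c] by (cases c, cases d) auto
      ultimately show "connected_component (H \<times> H) c d"
        using cc_times by (cases c, cases d) fastforce
    qed
  qed
  have "adapted S U"
    unfolding adapted_def
  proof (intro conjI ballI impI allI)
    show "(\<Union>c\<in>TT. U c) = TT" using UTT cU by blast
  next
    fix c :: "(complex^'n) \<times> (complex^'n)" assume c: "c \<in> TT"
    show "c \<in> U c" using cU[OF c] .
    have "small ((torus \<inter> ball (fst c) (R c)) \<times> (torus \<inter> ball (snd c) (R c)))"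
    proof (rule small_prod)
      show "fst c \<in> torus" "snd c \<in> torus" using c by auto
      show "0 < R c" by (rule Rpos)
      fix z :: complex assume z: "cmod z = 1" "cmod (z - 1) < R c"
      have "cmod (z - 1) < \<eta>0" using z(2) Rle[of c] by linarith
      then show "\<exists>\<theta>. \<bar>\<theta>\<bar> < 1/4 \<and> e1 \<theta> = z" using \<eta>0(2) z(1) by blast
    qed
    then show "small (U c)" by (simp add: U_def)
  next
    fix c d :: "(complex^'n) \<times> (complex^'n)" assume "c \<in> TT" "d \<in> TT" "U c \<inter> U d \<noteq> {}"
    then obtain x where x: "x \<in> U c" "x \<in> U d" by blast
    show "tpre S c d \<or> tpre S d c"
    proof (cases "R d \<le> R c")
      case True then show ?thesis using key[OF x] by blast
    next
      case False then show ?thesis using key[OF x(2,1)] by simp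
    qed
  next
    fix c d :: "(complex^'n) \<times> (complex^'n)" and H assume c: "c \<in> TT" and d: "d \<in> TT" and H: "H \<in> S"
      and h: "tpre S c d \<and> c \<in> H \<times> H \<and> d \<notin> H \<times> H"
    show "U d \<inter> (H \<times> H) = {}"
    proof (rule ccontr)
      assume "U d \<inter> (H \<times> H) \<noteq> {}"
      then obtain y where y: "y \<in> U d" "y \<in> H \<times> H" by blast
      have "fst d \<notin> H \<or> snd d \<notin> H" using h by (cases d) auto
      then show False
        using R1[OF H _ , of d "fst y"] R2[OF H, of d "snd y"] y Rpos[of d]
        by (cases y) (auto simp: U_def)
    qed
  next
    fix c d :: "(complex^'n) \<times> (complex^'n)" and H assume c: "c \<in> TT" and d: "d \<in> TT" and H: "H \<in> S"
      and h: "c \<in> H \<times> H \<and> d \<in> H \<times> H \<and> U c \<inter> U d \<noteq> {}"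
    then obtain x where x: "x \<in> U c" "x \<in> U d" by blast
    show "connected_component (H \<times> H) c d"
    proof (cases "R d \<le> R c")
      case True then show ?thesis using key[OF x] H h by blast
    next
      case False then show ?thesis using key[OF x(2,1)] H h connected_component_sym by fastforce
    qed
  qed
  then show ?thesis by blast
qed

theorem mainTheorem15:
  fixes S :: "(complex^'n) set set"
  assumes "finite S" and "\<forall>H\<in>S. closed_subgroup H"
  shows "\<exists>U. adapted S U \<and> (\<forall>U'. refinement U' U \<longrightarrow> adapted S U')"
  using main_aux[OF assms] adapted_refine by blast


end
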